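(* Fix $\theta\in\mathcal B_0$ and a moment order $k\in[L]$, and suppose that, on an event of probability at least $1-\zeta$, the inlier stability condition holds for the cloud $\{\check g^{(k)}_n(\theta)\}_{n=1}^N$ with mean $\mu^{(k)}_g(\theta)$, covariance $\Sigma^{(k)}_g(\theta)$ and constants $\delta_{\mu,k}(\zeta),\delta_{\Sigma,k}(\zeta)$. Let $\hat w^{(k)}(\theta)=\bar w^{[s]}\in\Delta_{N,\epsilon}$ be the weight vector output by the outer-loop procedure at a terminating iteration $s$ with center $\hat\mu^{[s]}$. Then, on that event, $$\Big\|\sum_{n=1}^N\hat w^{(k)}_n(\theta)\check g^{(k)}_n(\theta)-\mu^{(k)}_g(\theta)\Big\|_2\le\delta_{\mu,k}(\zeta)+\alpha_\epsilon\sqrt{C_k},\qquad\alpha_\epsilon=\sqrt{\tfrac{\epsilon}{1-2\epsilon}},$$ where either (a) $C_k=C_{stop,k}$ is the stopping threshold that the terminating certificate satisfies, $\gamma(\bar w^{[s]};\hat\mu^{[s]})\le C_{stop,k}$; or (b) the certificate is produced by the MW–MMW rounds, so that $\gamma(\bar w^{[s]};\hat\mu^{[s]})\le\mathrm{OPT}(\hat\mu^{[s]})+\delta_{T,k}$, the error satisfies $\|\hat\mu^{[s]}-\mu^{(k)}_g(\theta)\|_2\le R_k$, and $$C_k=\sup_{\theta'\in\mathcal B_0}\|\Sigma^{(k)}_g(\theta')\|_{op}+\delta_{\Sigma,k}(\zeta)+(\delta_{\mu,k}(\zeta)+R_k)^2+\delta_{T,k},\quad \delta_{T,k}\le4\nu_k\Big(\sqrt{\tfrac{\log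 p}{T}}+\sqrt{\tfrac{\log(1/(1-\epsilon))}{T}}\Big),$$ with $\nu_k=\max_{i,j}\|\check g^{(k)}_i(\theta)-\check g^{(k)}_j(\theta)\|_2^2$.
   Context: Fix $\epsilon\in[0,1/3)$, $\zeta\in(0,1)$, a parameter set $\Theta\subseteq\mathbb R^p$ and a ball $\mathcal B_0\subseteq\Theta$. For each moment order $k\in[L]$ and $\theta$, $\check g^{(k)}_1(\theta),\dots,\check g^{(k)}_N(\theta)\in\mathbb R^p$ are (contaminated) per-observation gradients. For an index set $I$ and $\epsilon'\in[0,1)$, $\Delta_{I,\epsilon'}=\{w\in\mathbb R^I:\sum_{n\in I}w_n=1,0\le w_n\le\frac1{(1-\epsilon')|I|}\}$, $\Delta_{N,\epsilon}=\Delta_{[N],\epsilon}$. For vectors $g_1,\dots,g_N$ and a center $\hat\mu$: $S(w;\hat\mu)=\sum_nw_n(g_n-\hat\mu)(g_n-\hat\mu)^\top$, $\gamma(w;\hat\mu)=\|S(w;\hat\mu)\|_{op}$, $\mathrm{OPT}(\hat\mu)=\min_{w\in\Delta_{N,\epsilon}}\max_{\rho\succeq0,\mathrm{Tr}\rho=1}\mathrm{Tr}(S(w;\hat\mu)\rho)$. Inlier stability condition for a cloud $g_1,\dots,g_N$ with mean $\mu_g$, PSD $\Sigma_g$, constants $\delta_\mu,\delta_\Sigma$: there is a partition $[N]=I_{in}\sqcup I_{out}$ with $|I_{out}|\le\epsilon N$ such that for all $w\in\Delta_{I_{in},\epsilon/(1-\epsilon)}$, $\|\sum_{n\in I_{in}}w_n(g_n-\mu_g)\|_2\le\delta_\mu$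 and $\sum_{n\in I_{in}}w_n(g_n-\mu_g)(g_n-\mu_g)^\top\preceq\Sigma_g+\delta_\Sigma I$. Outer-loop procedure (spectral gradient reweighting): start from a center $\hat\mu^{[1]}$ in the convex hull of the cloud; at iteration $s$ compute weights $\bar w^{[s]}\in\Delta_{N,\epsilon}$ (via multiplicative-weights / matrix-multiplicative-weights rounds with $T$ inner iterations) for the fixed center $\hat\mu^{[s]}$; stop if $\gamma(\bar w^{[s]};\hat\mu^{[s]})\le C_{stop,k}$, otherwise set $\hat\mu^{[s+1]}=\sum_n\bar w^{[s]}_ng_n$. *)

theory Defs
  imports "HOL-Analysis.Analysis"
begin

text \<open>Vectors in R^p are real^'p (p = CARD('p)); p x p matrices are real^'p^'p.
  Observations are indexed by [N] = {1..N}.\<close>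

definition outer :: "real^'p \<Rightarrow> real^'p \<Rightarrow> real^'p^'p" where
  "outer x y = (\<chi> i j. x$i * y$j)"

definition op_norm :: "real^'p^'p \<Rightarrow> real" where
  "op_norm A = onorm (\<lambda>x. A *v x)"

definition psd :: "real^'p^'p \<Rightarrow> bool" where
  "psd A \<longleftrightarrow> transpose A = A \<and> (\<forall>x. 0 \<le> x \<bullet> (A *v x))"

definition loewner_le :: "real^'p^'p \<Rightarrow> real^'p^'p \<Rightarrow> bool" where
  "loewner_le A B \<longleftrightarrow> psd (B - A)"

definition capped_simplex :: "nat set \<Rightarrow> real \<Rightarrow> (nat \<Rightarrow> real) set" where
  "capped_simplex I e =
     {w. (\<forall>n\<in>I. 0 \<le> w n \<and> w n \<le> 1 / ((1 - e) * real (card I))) \<and> (\<Sum>n\<in>I. w n) = 1}"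

definition Smat :: "nat \<Rightarrow> (nat \<Rightarrow> real^'p) \<Rightarrow> (nat \<Rightarrow> real) \<Rightarrow> real^'p \<Rightarrow> real^'p^'p" where
  "Smat N g w mu = (\<Sum>n\<in>{1..N}. w n *\<^sub>R outer (g n - mu) (g n - mu))"

definition gamma :: "nat \<Rightarrow> (nat \<Rightarrow> real^'p) \<Rightarrow> (nat \<Rightarrow> real) \<Rightarrow> real^'p \<Rightarrow> real" where
  "gamma N g w mu = op_norm (Smat N g w mu)"

definition OPT :: "nat \<Rightarrow> real \<Rightarrow> (nat \<Rightarrow> real^'p) \<Rightarrow> real^'p \<Rightarrow> real" where
  "OPT N eps g mu =
     Inf ((\<lambda>w. Sup ((\<lambda>\<rho>. trace (Smat N g w mu ** \<rho>)) ` {\<rho>. psd \<rho> \<and> trace \<rho> = 1}))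
          ` capped_simplex {1..N} eps)"

definition inlier_stable ::
  "nat \<Rightarrow> real \<Rightarrow> (nat \<Rightarrow> real^'p) \<Rightarrow> real^'p \<Rightarrow> real^'p^'p \<Rightarrow> real \<Rightarrow> real \<Rightarrow> bool" where
  "inlier_stable N eps g mu_g Sigma_g d_mu d_Sigma \<longleftrightarrow>
     (\<exists>Iin Iout. Iin \<union> Iout = {1..N} \<and> Iin \<inter> Iout = {} \<and> real (card Iout) \<le> eps * real N \<and>
        (\<forall>w\<in>capped_simplex Iin (eps / (1 - eps)).
           norm (\<Sum>n\<in>Iin. w n *\<^sub>R (g n - mu_g)) \<le> d_mu \<and>
           loewner_le (\<Sum>n\<in>Iin. w n *\<^sub>R outer (g n - mu_g) (g n - mu_g))
                      (Sigma_g + d_Sigma *\<^sub>R mat 1)))"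

end

theory Submission
  imports Defs
begin


lemma outer_mulv: "outer x y *v v = (y \<bullet> v) *\<^sub>R x"
  by (simp add: vec_eq_iff matrix_vector_mult_def outer_def inner_vec_def sum_distrib_left mult_ac)

lemma sum_mulv: "(\<Sum>n\<in>A. f n) *v (v::real^'p) = (\<Sum>n\<in>A. f n *v v)"
  by (simp add: vec_eq_iff matrix_vector_mult_def sum_component sum_distrib_right sum.swap[of _ A])

lemma scale_mulv: "(c *\<^sub>R (M::real^'p^'q)) *v v = c *\<^sub>R (M *v v)"
  by (simp add: vec_eq_iff matrix_vector_mult_def sum_distrib_left mult_ac)

lemma quad_sum: "v \<bullet> ((\<Sum>n\<in>A. c n *\<^sub>R outer (x n) (x n)) *v v) = (\<Sum>n\<in>A. c n * (v \<bullet> x n)\<^sup>2)"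
  by (simp add: sum_mulv scale_mulv outer_mulv inner_sum_right power2_eq_square inner_commute mult.assoc)

lemma Smat_quad: "v \<bullet> (Smat N g w mu *v v) = (\<Sum>n\<in>{1..N}. w n * (v \<bullet> (g n - mu))\<^sup>2)"
  unfolding Smat_def by (rule quad_sum)

lemma quad_le_opnorm: "v \<bullet> (A *v v) \<le> op_norm A * (norm v)\<^sup>2"
proof -
  have "v \<bullet> (A *v v) \<le> norm v * norm (A *v v)" by (rule Cauchy_Schwarz_ineq2[THEN abs_le_D1])
  also have "\<dots> \<le> norm v * (op_norm A * norm v)"
    unfolding op_norm_def by (rule mult_left_mono[OF onorm]) auto
  finally show ?thesis by (simp add: power2_eq_square mult_ac)
qed

lemma op_norm_nonneg: "0 \<le> op_norm A"
  unfolding op_norm_def by (rule onorm_pos_le) simp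

lemma wcs:
  fixes c y :: "nat \<Rightarrow> real"
  assumes "\<And>n. n \<in> I \<Longrightarrow> 0 \<le> c n"
  shows "(\<Sum>n\<in>I. c n * y n)\<^sup>2 \<le> (\<Sum>n\<in>I. c n) * (\<Sum>n\<in>I. c n * (y n)\<^sup>2)"
proof -
  have "(\<Sum>n\<in>I. sqrt (c n) * (sqrt (c n) * y n))\<^sup>2 \<le> (\<Sum>n\<in>I. (sqrt (c n))\<^sup>2) * (\<Sum>n\<in>I. (sqrt (c n) * y n)\<^sup>2)"
    by (rule Cauchy_Schwarz_ineq_sum)
  moreover have "(\<Sum>n\<in>I. sqrt (c n) * (sqrt (c n) * y n)) = (\<Sum>n\<in>I. c n * y n)"
    by (rule sum.cong) (use assms in \<open>auto simp: mult.assoc[symmetric]\<close>)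
  moreover have "(\<Sum>n\<in>I. (sqrt (c n))\<^sup>2) = (\<Sum>n\<in>I. c n)"
    by (rule sum.cong) (use assms in auto)
  moreover have "(\<Sum>n\<in>I. (sqrt (c n) * y n)\<^sup>2) = (\<Sum>n\<in>I. c n * (y n)\<^sup>2)"
    by (rule sum.cong) (use assms in \<open>auto simp: power_mult_distrib\<close>)
  ultimately show ?thesis by simp
qed

lemma inner_transpose_sym:
  fixes A :: "real^'p^'p"
  assumes "transpose A = A"
  shows "x \<bullet> (A *v y) = y \<bullet> (A *v x)"
proof -
  have "x \<bullet> (A *v y) = (x v* A) \<bullet> y" by (simp add: dot_lmul_matrix)
  also have "x v* A = transpose A *v x" by simp
  finally show ?thesis using assms by (simp add: inner_commute)
qed

lemma psd_quad_expand:
  fixes A :: "real^'p^'p"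
  assumes "transpose A = A"
  shows "(s *\<^sub>R x - t *\<^sub>R y) \<bullet> (A *v (s *\<^sub>R x - t *\<^sub>R y))
     = s\<^sup>2 * (x \<bullet> (A *v x)) - 2 * s * t * (x \<bullet> (A *v y)) + t\<^sup>2 * (y \<bullet> (A *v y))"
  using inner_transpose_sym[OF assms, of x y]
  by (simp add: matrix_vector_mult_diff_distrib matrix_vector_mult_scaleR inner_diff_left inner_diff_right
      power2_eq_square algebra_simps)

lemma psd_cs:
  fixes A :: "real^'p^'p"
  assumes "psd A"
  shows "(x \<bullet> (A *v y))\<^sup>2 \<le> (x \<bullet> (A *v x)) * (y \<bullet> (A *v y))"
proof -
  have sym: "transpose A = A" and nn: "\<And>z. 0 \<le> z \<bullet> (A *v z)" using assms by (auto simp: psd_def)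
  define X where "X = x \<bullet> (A *v x)"
  define Y where "Y = y \<bullet> (A *v y)"
  define b where "b = x \<bullet> (A *v y)"
  have q: "0 \<le> s\<^sup>2 * X - 2 * s * t * b + t\<^sup>2 * Y" for s t
    using nn[of "s *\<^sub>R x - t *\<^sub>R y"] psd_quad_expand[OF sym, of s x t y] by (simp add: X_def Y_def b_def)
  have X0: "0 \<le> X" "0 \<le> Y" using nn by (auto simp: X_def Y_def)
  show ?thesis
  proof (cases "Y > 0")
    case True
    have "0 \<le> Y\<^sup>2 * X - 2 * Y * b * b + b\<^sup>2 * Y" using q[of Y b] .
    hence "0 \<le> Y * (Y * X - b\<^sup>2)" by (simp add: power2_eq_square algebra_simps)
    hence "0 \<le> Y * X - b\<^sup>2" using True by (simp add: zero_le_mult_iff)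
    thus ?thesis by (simp add: X_def Y_def b_def mult_ac)
  next
    case False
    hence Y: "Y = 0" using X0 by simp
    show ?thesis
    proof (cases "X > 0")
      case True
      have "0 \<le> b\<^sup>2 * X - 2 * b * X * b + X\<^sup>2 * Y" using q[of b X] .
      hence "0 \<le> - X * b\<^sup>2" using Y by (simp add: power2_eq_square algebra_simps)
      hence "b\<^sup>2 \<le> 0" using True by (simp add: mult_le_0_iff)
      thus ?thesis using X0 Y by (simp add: X_def Y_def b_def)
    next
      case False
      hence X: "X = 0" using X0 by simp
      have "0 \<le> 1 * X - 2 * 1 * b * b + b\<^sup>2 * Y" using q[of 1 b] by simp
      hence "b\<^sup>2 \<le> 0" using X Y by (simp add: power2_eq_square)
      thus ?thesis using X Y by (simp add: X_def Y_def b_def)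
    qed
  qed
qed

lemma trace_outer: "trace (M ** outer r r) = r \<bullet> (M *v r)"
  by (simp add: trace_def matrix_matrix_mult_def outer_def inner_vec_def matrix_vector_mult_def
      sum_distrib_left mult_ac)

lemma trace_lin: "trace (M ** (A - c *\<^sub>R B)) = trace (M ** A) - c * trace (M ** (B::real^'p^'p))"
  by (simp add: trace_def matrix_matrix_mult_def sum_subtractf sum_distrib_left algebra_simps)

lemma axis_quad: "axis j 1 \<bullet> ((A::real^'p^'p) *v axis i 1) = A$j$i"
  by (simp add: inner_axis' matrix_vector_mult_basis column_def)


lemma trace_nonneg_aux:
  fixes M :: "real^'p^'p"
  assumes M: "\<And>v. 0 \<le> v \<bullet> (M *v v)" and S: "finite S"
  shows "\<forall>\<rho>. psd \<rho> \<and> (\<forall>i j. i \<notin> S \<or> j \<notin> S \<longrightarrow> \<rho>$i$j = 0) \<longrightarrow> 0 \<le> trace (M ** \<rho>)"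
  using S
proof (induction S rule: finite_induct)
  case empty
  show ?case
  proof (intro allI impI)
    fix \<rho> :: "real^'p^'p" assume "psd \<rho> \<and> (\<forall>i j. i \<notin> {} \<or> j \<notin> {} \<longrightarrow> \<rho>$i$j = 0)"
    hence "\<rho> = 0" by (simp add: vec_eq_iff)
    thus "0 \<le> trace (M ** \<rho>)" by (simp add: trace_def matrix_matrix_mult_def)
  qed
next
  case (insert i S)
  show ?case
  proof (intro allI impI)
    fix \<rho> :: "real^'p^'p"
    assume as: "psd \<rho> \<and> (\<forall>j k. j \<notin> insert i S \<or> k \<notin> insert i S \<longrightarrow> \<rho>$j$k = 0)"
    hence psd: "psd \<rho>" and supp: "\<And>j k. j \<notin> insert i S \<or> k \<notin> insert i S \<Longrightarrow> \<rho>$j$k = 0" by auto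
    have sym: "\<rho>$j$k = \<rho>$k$j" for j k
      using psd unfolding psd_def by (metis transpose_def vec_lambda_beta)
    have nn: "\<And>z. 0 \<le> z \<bullet> (\<rho> *v z)" using psd by (auto simp: psd_def)
    have cs: "(\<rho>$j$k)\<^sup>2 \<le> \<rho>$j$j * \<rho>$k$k" for j k
      using psd_cs[OF psd, of "axis j 1" "axis k 1"] by (simp add: axis_quad)
    have dnn: "0 \<le> \<rho>$i$i" using nn[of "axis i 1"] by (simp add: axis_quad)
    show "0 \<le> trace (M ** \<rho>)"
    proof (cases "\<rho>$i$i = 0")
      case True
      have "\<rho>$j$i = 0" for j using cs[of j i] True by simp
      hence "\<forall>j k. j \<notin> S \<or> k \<notin> S \<longrightarrow> \<rho>$j$k = 0"
        using supp sym by (metis insert_iff)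
      thus ?thesis using insert.IH psd by blast
    next
      case False
      hence dpos: "0 < \<rho>$i$i" using dnn by simp
      define r where "r = \<rho> *v axis i 1"
      have rj: "r$j = \<rho>$j$i" for j
        by (simp add: r_def matrix_vector_mult_basis column_def)
      define \<rho>' where "\<rho>' = \<rho> - (1 / \<rho>$i$i) *\<^sub>R outer r r"
      have psd': "psd \<rho>'"
        unfolding psd_def
      proof (intro conjI allI)
        show "transpose \<rho>' = \<rho>'"
          by (simp add: \<rho>'_def vec_eq_iff transpose_def outer_def sym mult.commute)
      next
        fix x :: "real^'p"
        have e: "x \<bullet> (\<rho>' *v x) = x \<bullet> (\<rho> *v x) - (1 / \<rho>$i$i) * (r \<bullet> x)\<^sup>2"
          by (simp add: \<rho>'_def matrix_vector_mult_diff_rdistrib scale_mulv outer_mulv inner_diff_right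
              power2_eq_square inner_commute)
        have "(r \<bullet> x)\<^sup>2 \<le> (x \<bullet> (\<rho> *v x)) * \<rho>$i$i"
          using psd_cs[OF psd, of x "axis i 1"] by (simp add: r_def axis_quad inner_commute)
        hence "(1 / \<rho>$i$i) * (r \<bullet> x)\<^sup>2 \<le> x \<bullet> (\<rho> *v x)"
          using dpos by (simp add: field_simps)
        thus "0 \<le> x \<bullet> (\<rho>' *v x)" using e by simp
      qed
      have supp': "\<forall>j k. j \<notin> S \<or> k \<notin> S \<longrightarrow> \<rho>'$j$k = 0"
      proof (intro allI impI)
        fix j k assume jk: "j \<notin> S \<or> k \<notin> S"
        have v: "\<rho>'$j$k = \<rho>$j$k - \<rho>$j$i * \<rho>$k$i / \<rho>$i$i"
          by (simp add: \<rho>'_def outer_def rj)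
        show "\<rho>'$j$k = 0"
        proof (cases "j = i")
          case True thus ?thesis using v dpos sym[of i k] by simp
        next
          case ji: False
          show ?thesis
          proof (cases "k = i")
            case True thus ?thesis using v dpos by simp
          next
            case False
            hence "j \<notin> insert i S \<or> k \<notin> insert i S" using jk ji by auto
            hence "\<rho>$j$k = 0" "\<rho>$j$i = 0 \<or> \<rho>$k$i = 0" using supp by (auto simp: supp)
            thus ?thesis using v by auto
          qed
        qed
      qed
      have "0 \<le> trace (M ** \<rho>')" using insert.IH psd' supp' by blast
      moreover have "trace (M ** \<rho>') = trace (M ** \<rho>) - (1 / \<rho>$i$i) * (r \<bullet> (M *v r))"
        unfolding \<rho>'_def trace_lin trace_outer ..
      moreover have "0 \<le> (1 / \<rho>$i$i) * (r \<bullet> (M *v r))" using M dpos by simp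
      ultimately show ?thesis by linarith
    qed
  qed
qed

lemma trace_nonneg:
  fixes M :: "real^'p^'p"
  assumes "\<And>v. 0 \<le> v \<bullet> (M *v v)" "psd \<rho>"
  shows "0 \<le> trace (M ** \<rho>)"
  using trace_nonneg_aux[OF assms(1), of UNIV] assms(2) by simp

lemma trace_le:
  fixes S :: "real^'p^'p"
  assumes "\<And>v. v \<bullet> (S *v v) \<le> l * (norm v)\<^sup>2" "psd \<rho>" "trace \<rho> = 1"
  shows "trace (S ** \<rho>) \<le> l"
proof -
  have "0 \<le> trace ((l *\<^sub>R mat 1 - S) ** \<rho>)"
  proof (rule trace_nonneg[OF _ assms(2)])
    fix v :: "real^'p"
    show "0 \<le> v \<bullet> ((l *\<^sub>R mat 1 - S) *v v)"
      using assms(1)[of v] by (simp add: matrix_vector_mult_diff_rdistrib scale_mulv inner_diff_right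
          power2_norm_eq_inner)
  qed
  also have "trace ((l *\<^sub>R mat 1 - S) ** \<rho>) = l * trace \<rho> - trace (S ** \<rho>)"
  proof -
    have "(l *\<^sub>R mat 1 - S) ** \<rho> = l *\<^sub>R \<rho> - S ** \<rho>"
      by (simp add: vec_eq_iff matrix_matrix_mult_def sum_subtractf algebra_simps
          scalar_matrix_assoc[symmetric])
         (simp add: matrix_matrix_mult_def mat_def if_distrib sum.delta cong: if_cong)
    thus ?thesis by (simp add: trace_def sum_distrib_left sum_subtractf)
  qed
  finally show ?thesis using assms(3) by simp
qed


lemma stable_parts:
  assumes eps: "0 \<le> eps" "eps < 1/3" and N: "1 \<le> N"
    and Iin: "Iin \<union> Iout = {1..N}" "Iin \<inter> Iout = {}" "real (card Iout) \<le> eps * real N"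
  shows "finite Iin" "finite Iout" "Iin \<subseteq> {1..N}" "Iout \<subseteq> {1..N}"
    "real (card Iin) + real (card Iout) = real N" "(1 - eps) * real N \<le> real (card Iin)"
    "0 < card Iin"
proof -
  show f: "finite Iin" "finite Iout" "Iin \<subseteq> {1..N}" "Iout \<subseteq> {1..N}"
    using Iin(1) by (metis finite_Un finite_atLeastAtMost sup.cobounded1 sup.cobounded2)+
  have "card Iin + card Iout = N" using card_Un_disjoint[OF f(1,2) Iin(2)] Iin(1) by simp
  thus c: "real (card Iin) + real (card Iout) = real N" by (metis of_nat_add)
  thus c2: "(1 - eps) * real N \<le> real (card Iin)" using Iin(3) by (simp add: algebra_simps)
  have "0 < (1 - eps) * real N" using eps N by simp
  thus "0 < card Iin" using c2 by linarith
qed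

lemma sum_split:
  assumes "Iin \<union> Iout = {1..N}" "Iin \<inter> Iout = {}" "finite Iin" "finite Iout"
  shows "(\<Sum>n\<in>{1..N}. f n) = (\<Sum>n\<in>Iin. f n) + (\<Sum>n\<in>Iout. f n)"
  using sum.union_disjoint[OF assms(3,4,2), of f] assms(1) by simp

lemma core:
  fixes g :: "nat \<Rightarrow> real^'p"
  assumes eps: "0 \<le> eps" "eps < 1/3" and N: "1 \<le> N"
    and stable: "inlier_stable N eps g mu Sig dmu dS"
    and w: "w \<in> capped_simplex {1..N} eps"
    and gC: "gamma N g w mh \<le> C"
  shows "norm ((\<Sum>n\<in>{1..N}. w n *\<^sub>R g n) - mu) \<le> dmu + sqrt (eps / (1 - 2 * eps)) * sqrt C"
proof -
  obtain Iin Iout where I: "Iin \<union> Iout = {1..N}" "Iin \<inter> Iout = {}" "real (card Iout) \<le> eps * real N"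
    and st: "\<forall>w\<in>capped_simplex Iin (eps / (1 - eps)). norm (\<Sum>n\<in>Iin. w n *\<^sub>R (g n - mu)) \<le> dmu"
    using stable unfolding inlier_stable_def by blast
  note P = stable_parts[OF eps N I]
  note spl = sum_split[OF I(1,2) P(1,2)]
  have cardN: "card {1..N} = N" by simp
  have w0: "\<And>n. n \<in> {1..N} \<Longrightarrow> 0 \<le> w n" and wub: "\<And>n. n \<in> {1..N} \<Longrightarrow> w n \<le> 1 / ((1 - eps) * real N)"
    and w1: "(\<Sum>n\<in>{1..N}. w n) = 1"
    using w unfolding capped_simplex_def cardN by auto
  define a where "a = (\<Sum>n\<in>Iout. w n)"
  have a0: "0 \<le> a" unfolding a_def using w0 P(4) by (meson subsetD sum_nonneg)
  have "a \<le> (\<Sum>n\<in>Iout. 1 / ((1 - eps) * real N))"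
    unfolding a_def using wub P(4) by (meson subsetD sum_mono)
  hence a1: "a * ((1 - eps) * real N) \<le> real (card Iout)"
    using eps N by (simp add: field_simps)
  have epsN: "0 < (1 - eps) * real N" using eps N by simp
  have a2: "a * (1 - eps) \<le> eps"
  proof -
    have "a * ((1 - eps) * real N) \<le> eps * real N" using a1 I(3) by linarith
    thus ?thesis using N by (simp add: mult_ac)
  qed
  have a_lt: "a < 1/2"
  proof (rule ccontr)
    assume "\<not> a < 1/2"
    hence "(1/2) * (1 - eps) \<le> a * (1 - eps)" using eps by (intro mult_right_mono) auto
    moreover have "(1/2) * (1 - eps) = 1/2 - eps/2" by simp
    ultimately show False using a2 eps by linarith
  qed
  have sin: "(\<Sum>n\<in>Iin. w n) = 1 - a" using w1 spl[of w] unfolding a_def by simp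
  define w' where "w' n = w n / (1 - a)" for n
  have w'cap: "w' \<in> capped_simplex Iin (eps / (1 - eps))"
    unfolding capped_simplex_def
  proof (intro CollectI conjI ballI)
    show "(\<Sum>n\<in>Iin. w' n) = 1" using sin a_lt by (simp add: w'_def sum_divide_distrib[symmetric])
  next
    fix n assume n: "n \<in> Iin"
    hence nN: "n \<in> {1..N}" using P(3) by auto
    show "0 \<le> w' n" using w0[OF nN] a_lt by (simp add: w'_def)
    define mi where "mi = real (card Iin)"
    define mo where "mo = real (card Iout)"
    have mi0: "0 < mi" using P(7) by (simp add: mi_def)
    have e1: "1 - eps / (1 - eps) = (1 - 2 * eps) / (1 - eps)" using eps by (simp add: field_simps)
    have key: "(1 - 2 * eps) * mi \<le> (1 - eps) * ((1 - eps) * real N * (1 - a))"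
    proof -
      have h1: "mi = real N - mo" using P(5) by (simp add: mi_def mo_def)
      have h2: "eps * mo \<le> eps * (eps * real N)" using I(3) eps by (simp add: mo_def mult_left_mono)
      have h3: "(1 - eps) * (a * ((1 - eps) * real N)) \<le> (1 - eps) * mo"
        using a1 eps by (simp add: mo_def mult_left_mono)
      show ?thesis unfolding h1 using h2 h3 by (simp add: algebra_simps power2_eq_square)
    qed
    have pos: "0 < (1 - 2 * eps) * mi" using eps mi0 by simp
    have "w' n \<le> 1 / ((1 - eps) * real N) / (1 - a)"
      unfolding w'_def using wub[OF nN] a_lt by (intro divide_right_mono) auto
    also have "\<dots> = 1 / ((1 - eps) * real N * (1 - a))" by simp
    also have "\<dots> \<le> (1 - eps) / ((1 - 2 * eps) * mi)"
    proof -
      define X where "X = (1 - eps) * real N * (1 - a)"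
      have X0: "0 < X" using epsN a_lt by (simp add: X_def)
      have "1 / X = (1 - eps) / ((1 - eps) * X)" using eps by simp
      also have "\<dots> \<le> (1 - eps) / ((1 - 2 * eps) * mi)"
      proof (rule divide_left_mono)
        show "(1 - 2 * eps) * mi \<le> (1 - eps) * X" using key by (simp add: X_def)
        show "0 \<le> 1 - eps" using eps by simp
        show "0 < (1 - eps) * X * ((1 - 2 * eps) * mi)" using X0 pos eps by (intro mult_pos_pos pos) auto
      qed
      finally show ?thesis by (simp add: X_def)
    qed
    also have "\<dots> = 1 / ((1 - eps / (1 - eps)) * mi)" using eps by (simp add: e1)
    finally show "w' n \<le> 1 / ((1 - eps / (1 - eps)) * real (card Iin))" by (simp add: mi_def)
  qed
  have dm: "norm (\<Sum>n\<in>Iin. w' n *\<^sub>R (g n - mu)) \<le> dmu" using st w'cap by blast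
  have sw': "(\<Sum>n\<in>Iin. w' n) = 1" using w'cap by (simp add: capped_simplex_def)
  define mw where "mw = (\<Sum>n\<in>{1..N}. w n *\<^sub>R g n)"
  define mI where "mI = (\<Sum>n\<in>Iin. w' n *\<^sub>R g n)"
  have mimu: "mI - mu = (\<Sum>n\<in>Iin. w' n *\<^sub>R (g n - mu))"
    by (simp add: mI_def scaleR_diff_right sum_subtractf scaleR_sum_left[symmetric] sw')
  have inw: "(\<Sum>n\<in>Iin. w n *\<^sub>R g n) = (1 - a) *\<^sub>R mI"
    using a_lt by (simp add: mI_def w'_def scaleR_sum_right)
  define u where "u = mw - mI"
  define G where "G = gamma N g w mh"
  have G0: "0 \<le> G" by (simp add: G_def gamma_def op_norm_nonneg)
  have ubound: "(norm u)\<^sup>2 \<le> eps / (1 - 2 * eps) * C"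
  proof -
    define y where "y n = u \<bullet> (g n - mw)" for n
    define A where "A = (\<Sum>n\<in>Iin. w n * y n)"
    define B where "B = (\<Sum>n\<in>Iout. w n * y n)"
    define Pq where "Pq = (\<Sum>n\<in>Iin. w n * (y n)\<^sup>2)"
    define Qq where "Qq = (\<Sum>n\<in>Iout. w n * (y n)\<^sup>2)"
    have tot: "(\<Sum>n\<in>{1..N}. w n * y n) = 0"
    proof -
      have "(\<Sum>n\<in>{1..N}. w n * y n) = u \<bullet> (\<Sum>n\<in>{1..N}. w n *\<^sub>R (g n - mw))"
        by (simp add: y_def inner_sum_right)
      also have "(\<Sum>n\<in>{1..N}. w n *\<^sub>R (g n - mw)) = 0"
        unfolding scaleR_diff_right sum_subtractf scaleR_sum_left[symmetric] w1 mw_def by simp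
      finally show ?thesis by simp
    qed
    hence AB: "B = - A" using spl[of "\<lambda>n. w n * y n"] by (simp add: A_def B_def)
    have Aval: "A = - (1 - a) * (u \<bullet> u)"
    proof -
      have "A = u \<bullet> (\<Sum>n\<in>Iin. w n *\<^sub>R (g n - mw))"
        by (simp add: A_def y_def inner_sum_right)
      also have "(\<Sum>n\<in>Iin. w n *\<^sub>R (g n - mw)) = (1 - a) *\<^sub>R mI - (1 - a) *\<^sub>R mw"
        by (simp add: scaleR_diff_right sum_subtractf scaleR_sum_left[symmetric] sin inw)
      finally show ?thesis by (simp add: u_def inner_diff_right algebra_simps)
    qed
    have wi0: "\<And>n. n \<in> Iin \<Longrightarrow> 0 \<le> w n" using w0 P(3) by auto
    have wo0: "\<And>n. n \<in> Iout \<Longrightarrow> 0 \<le> w n" using w0 P(4) by auto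
    have csA: "A\<^sup>2 \<le> (1 - a) * Pq" using wcs[of Iin w y] wi0 sin by (simp add: A_def Pq_def)
    have csB: "B\<^sup>2 \<le> a * Qq" using wcs[of Iout w y] wo0 by (simp add: B_def Qq_def a_def)
    have P0: "0 \<le> Pq" unfolding Pq_def using wi0 by (simp add: sum_nonneg)
    have Q0: "0 \<le> Qq" unfolding Qq_def using wo0 by (simp add: sum_nonneg)
    have comb: "A\<^sup>2 \<le> a * (1 - a) * (Pq + Qq)"
    proof -
      have "a * A\<^sup>2 \<le> a * ((1 - a) * Pq)" using csA a0 by (simp add: mult_left_mono)
      moreover have "(1 - a) * A\<^sup>2 \<le> (1 - a) * (a * Qq)" using csB AB a_lt
        by (simp add: mult_left_mono)
      ultimately show ?thesis by (simp add: algebra_simps)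
    qed
    have var: "Pq + Qq \<le> u \<bullet> (Smat N g w mh *v u)"
    proof -
      define c where "c = u \<bullet> (mw - mh)"
      have e: "u \<bullet> (g n - mh) = y n + c" for n
        by (simp add: y_def c_def inner_diff_right)
      have "u \<bullet> (Smat N g w mh *v u) = (\<Sum>n\<in>{1..N}. w n * (y n + c)\<^sup>2)"
        by (simp add: Smat_quad e)
      also have "\<dots> = (\<Sum>n\<in>{1..N}. w n * (y n)\<^sup>2) + 2 * c * (\<Sum>n\<in>{1..N}. w n * y n)
                      + c\<^sup>2 * (\<Sum>n\<in>{1..N}. w n)"
        by (simp add: power2_eq_square algebra_simps sum.distrib sum_distrib_left sum_distrib_right)
      also have "\<dots> = (\<Sum>n\<in>{1..N}. w n * (y n)\<^sup>2) + c\<^sup>2" unfolding tot w1 by simp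
      finally show ?thesis using spl[of "\<lambda>n. w n * (y n)\<^sup>2"] by (simp add: Pq_def Qq_def)
    qed
    have "u \<bullet> (Smat N g w mh *v u) \<le> G * (norm u)\<^sup>2"
      using quad_le_opnorm by (simp add: G_def gamma_def)
    hence main: "(1 - a)\<^sup>2 * ((norm u)\<^sup>2)\<^sup>2 \<le> a * (1 - a) * (G * (norm u)\<^sup>2)"
    proof -
      assume h: "u \<bullet> (Smat N g w mh *v u) \<le> G * (norm u)\<^sup>2"
      have "(1 - a)\<^sup>2 * ((norm u)\<^sup>2)\<^sup>2 = A\<^sup>2"
        unfolding Aval power2_norm_eq_inner by (simp add: power2_eq_square algebra_simps)
      also have "\<dots> \<le> a * (1 - a) * (Pq + Qq)" by (rule comb)
      also have "\<dots> \<le> a * (1 - a) * (G * (norm u)\<^sup>2)"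
        using var h a0 a_lt by (intro mult_left_mono) auto
      finally show ?thesis .
    qed
    have ag: "a / (1 - a) \<le> eps / (1 - 2 * eps)"
      using a2 a_lt eps by (simp add: field_simps)
    show ?thesis
    proof (cases "u = 0")
      case True thus ?thesis using G0 gC eps by (simp add: G_def)
    next
      case False
      hence nu: "0 < (norm u)\<^sup>2" by simp
      have "(1 - a) * (norm u)\<^sup>2 \<le> a * G"
      proof -
        have "((1 - a) * (norm u)\<^sup>2) * ((1 - a) * (norm u)\<^sup>2) \<le> (a * G) * ((1 - a) * (norm u)\<^sup>2)"
          using main by (simp add: power2_eq_square mult_ac)
        thus ?thesis using nu a_lt by (simp add: mult_le_cancel_right)
      qed
      hence "(norm u)\<^sup>2 \<le> a / (1 - a) * G" using a_lt by (simp add: field_simps)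
      also have "\<dots> \<le> eps / (1 - 2 * eps) * G" by (rule mult_right_mono[OF ag G0])
      also have "\<dots> \<le> eps / (1 - 2 * eps) * C" using gC eps by (intro mult_left_mono) (auto simp: G_def)
      finally show ?thesis .
    qed
  qed
  have un: "norm u \<le> sqrt (eps / (1 - 2 * eps)) * sqrt C"
  proof -
    have "norm u = sqrt ((norm u)\<^sup>2)" by simp
    also have "\<dots> \<le> sqrt (eps / (1 - 2 * eps) * C)" using ubound real_sqrt_le_mono by blast
    also have "\<dots> = sqrt (eps / (1 - 2 * eps)) * sqrt C" by (rule real_sqrt_mult)
    finally show ?thesis .
  qed
  have "mw - mu = u + (mI - mu)" by (simp add: u_def)
  hence "norm (mw - mu) \<le> norm u + norm (mI - mu)" by (metis norm_triangle_ineq)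
  thus ?thesis using un dm mimu mw_def by simp
qed


lemma P_nonempty: "outer (axis i 1) (axis i 1) \<in> {\<rho>::real^'p^'p. psd \<rho> \<and> trace \<rho> = 1}"
proof -
  have q: "x \<bullet> (outer (axis i 1) (axis i (1::real)) *v x) = (axis i 1 \<bullet> x)\<^sup>2" for x :: "real^'p"
    by (simp only: outer_mulv inner_scaleR_right power2_eq_square inner_commute)
  have "transpose (outer (axis i 1) (axis i (1::real))) = outer (axis i 1) (axis i 1)"
    by (simp add: vec_eq_iff transpose_def outer_def mult.commute)
  hence "psd (outer (axis i 1) (axis i (1::real)))"
    unfolding psd_def using q by simp
  moreover have "trace (outer (axis i 1) (axis i (1::real))) = 1"
    by (simp add: trace_def outer_def axis_def if_distrib[where f="\<lambda>x. x * _"] sum.delta cong: if_cong)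
  ultimately show ?thesis by simp
qed

lemma Smat_quad_nonneg:
  assumes "\<And>n. n \<in> {1..N} \<Longrightarrow> 0 \<le> w n"
  shows "0 \<le> v \<bullet> (Smat N g w mu *v v)"
  unfolding Smat_quad using assms by (intro sum_nonneg) auto

lemma Smat_quad_upper:
  assumes "\<And>n. n \<in> {1..N} \<Longrightarrow> 0 \<le> w n"
  shows "v \<bullet> (Smat N g w mu *v v) \<le> (\<Sum>n\<in>{1..N}. w n * (norm (g n - mu))\<^sup>2) * (norm v)\<^sup>2"
  unfolding Smat_quad sum_distrib_right
proof (rule sum_mono)
  fix n assume n: "n \<in> {1..N}"
  have "(v \<bullet> (g n - mu))\<^sup>2 \<le> (norm v * norm (g n - mu))\<^sup>2"
    by (metis Cauchy_Schwarz_ineq2 abs_le_square_iff abs_mult abs_norm_cancel)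
  thus "w n * (v \<bullet> (g n - mu))\<^sup>2 \<le> w n * (norm (g n - mu))\<^sup>2 * (norm v)\<^sup>2"
    using assms[OF n] by (simp add: power_mult_distrib mult_left_mono mult_ac)
qed

lemma opt_bound:
  fixes g :: "nat \<Rightarrow> real^'p"
  assumes eps: "0 \<le> eps" "eps < 1/3" and N: "1 \<le> N"
    and stable: "inlier_stable N eps g mu Sig dmu dS"
    and R: "norm (mh - mu) \<le> R"
  shows "OPT N eps g mh \<le> op_norm Sig + dS + (dmu + R)\<^sup>2"
proof -
  obtain Iin Iout where I: "Iin \<union> Iout = {1..N}" "Iin \<inter> Iout = {}" "real (card Iout) \<le> eps * real N"
    and st: "\<forall>w\<in>capped_simplex Iin (eps / (1 - eps)). norm (\<Sum>n\<in>Iin. w n *\<^sub>R (g n - mu)) \<le> dmu \<and>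
           loewner_le (\<Sum>n\<in>Iin. w n *\<^sub>R outer (g n - mu) (g n - mu)) (Sig + dS *\<^sub>R mat 1)"
    using stable unfolding inlier_stable_def by blast
  note P = stable_parts[OF eps N I]
  define PP where "PP = {\<rho>::real^'p^'p. psd \<rho> \<and> trace \<rho> = 1}"
  define F where "F w = Sup ((\<lambda>\<rho>. trace (Smat N g w mh ** \<rho>)) ` PP)" for w
  define W where "W = capped_simplex {1..N} eps"
  have OPTeq: "OPT N eps g mh = Inf (F ` W)" by (simp add: OPT_def F_def W_def PP_def)
  obtain i0 :: 'p where True by simp
  define \<rho>0 where "\<rho>0 = outer (axis i0 1) (axis i0 (1::real))"
  have r0: "\<rho>0 \<in> PP" unfolding PP_def \<rho>0_def by (rule P_nonempty)
  have Fge: "0 \<le> F w" if wW: "w \<in> W" for w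
  proof -
    have w0: "\<And>n. n \<in> {1..N} \<Longrightarrow> 0 \<le> w n" using wW by (auto simp: W_def capped_simplex_def)
    have bdd: "bdd_above ((\<lambda>\<rho>. trace (Smat N g w mh ** \<rho>)) ` PP)"
    proof (rule bdd_aboveI2)
      fix \<rho> assume "\<rho> \<in> PP"
      thus "trace (Smat N g w mh ** \<rho>) \<le> (\<Sum>n\<in>{1..N}. w n * (norm (g n - mh))\<^sup>2)"
        unfolding PP_def by (intro trace_le[OF Smat_quad_upper[OF w0]]) auto
    qed
    have "0 \<le> trace (Smat N g w mh ** \<rho>0)"
      using r0 by (intro trace_nonneg Smat_quad_nonneg w0) (auto simp: PP_def)
    also have "\<dots> \<le> F w" unfolding F_def using bdd r0 by (rule cSUP_upper2) simp
    finally show ?thesis .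
  qed
  define mi where "mi = real (card Iin)"
  have mi0: "0 < mi" using P(7) by (simp add: mi_def)
  define ws where "ws n = (if n \<in> Iin then 1 / mi else 0)" for n
  have ws_sum: "(\<Sum>n\<in>{1..N}. ws n * f n) = (\<Sum>n\<in>Iin. f n / mi)" for f :: "nat \<Rightarrow> real"
  proof -
    have "(\<Sum>n\<in>{1..N}. ws n * f n) = (\<Sum>n\<in>{1..N}. if n \<in> Iin then f n / mi else 0)"
      by (rule sum.cong) (auto simp: ws_def)
    also have "\<dots> = (\<Sum>n\<in>{1..N} \<inter> Iin. f n / mi)" by (simp add: sum.inter_restrict)
    also have "{1..N} \<inter> Iin = Iin" using P(3) by auto
    finally show ?thesis .
  qed
  have wsW: "ws \<in> W"
    unfolding W_def capped_simplex_def
  proof (intro CollectI conjI ballI)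
    fix n assume "n \<in> {1..N}"
    show "0 \<le> ws n" using mi0 by (simp add: ws_def)
    have "1 / mi \<le> 1 / ((1 - eps) * real N)"
      using P(6) eps N mi0 by (intro divide_left_mono) (auto simp: mi_def)
    moreover have "0 \<le> 1 / ((1 - eps) * real N)" using eps by simp
    ultimately show "ws n \<le> 1 / ((1 - eps) * real (card {1..N}))" by (simp add: ws_def)
  next
    show "sum ws {1..N} = 1" using ws_sum[of "\<lambda>_. 1"] mi0 by (simp add: mi_def)
  qed
  define wi where "wi n = 1 / mi" for n :: nat
  have wiC: "wi \<in> capped_simplex Iin (eps / (1 - eps))"
    unfolding capped_simplex_def
  proof (intro CollectI conjI ballI)
    fix n assume "n \<in> Iin"
    show "0 \<le> wi n" using mi0 by (simp add: wi_def)
    have e: "0 < 1 - eps / (1 - eps)" "1 - eps / (1 - eps) \<le> 1" using eps by (auto simp: field_simps)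
    have "1 / mi \<le> 1 / ((1 - eps / (1 - eps)) * mi)"
      using e mi0 by (intro divide_left_mono) (auto simp: mult_le_cancel_right1)
    thus "wi n \<le> 1 / ((1 - eps / (1 - eps)) * real (card Iin))" by (simp add: wi_def mi_def)
  next
    show "sum wi Iin = 1" using mi0 by (simp add: wi_def mi_def)
  qed
  have dmb: "norm (\<Sum>n\<in>Iin. wi n *\<^sub>R (g n - mu)) \<le> dmu"
    and lw: "loewner_le (\<Sum>n\<in>Iin. wi n *\<^sub>R outer (g n - mu) (g n - mu)) (Sig + dS *\<^sub>R mat 1)"
    using st wiC by auto
  define L where "L = op_norm Sig + dS + (dmu + R)\<^sup>2"
  have quadL: "v \<bullet> (Smat N g ws mh *v v) \<le> L * (norm v)\<^sup>2" for v
  proof -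
    define c where "c = v \<bullet> (mu - mh)"
    define X where "X = v \<bullet> (\<Sum>n\<in>Iin. wi n *\<^sub>R (g n - mu))"
    have e: "v \<bullet> (g n - mh) = v \<bullet> (g n - mu) + c" for n by (simp add: c_def inner_diff_right)
    have "v \<bullet> (Smat N g ws mh *v v) = (\<Sum>n\<in>Iin. (v \<bullet> (g n - mu) + c)\<^sup>2 / mi)"
      unfolding Smat_quad ws_sum e ..
    also have "\<dots> = (\<Sum>n\<in>Iin. wi n * (v \<bullet> (g n - mu))\<^sup>2) + 2 * c * X + c\<^sup>2"
    proof -
      have X': "X = (\<Sum>n\<in>Iin. (v \<bullet> (g n - mu)) / mi)"
        by (simp add: X_def wi_def inner_sum_right)
      have "(\<Sum>n\<in>Iin. (v \<bullet> (g n - mu) + c)\<^sup>2 / mi)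
          = (\<Sum>n\<in>Iin. wi n * (v \<bullet> (g n - mu))\<^sup>2 + 2 * c * ((v \<bullet> (g n - mu)) / mi) + c\<^sup>2 / mi)"
      proof (rule sum.cong)
        fix n
        have "(p + c)\<^sup>2 / mi = (1 / mi) * p\<^sup>2 + 2 * c * (p / mi) + c\<^sup>2 / mi" for p
          using mi0 by (simp add: power2_eq_square field_simps)
        thus "(v \<bullet> (g n - mu) + c)\<^sup>2 / mi = wi n * (v \<bullet> (g n - mu))\<^sup>2 + 2 * c * ((v \<bullet> (g n - mu)) / mi) + c\<^sup>2 / mi"
          by (simp add: wi_def)
      qed simp
      also have "\<dots> = (\<Sum>n\<in>Iin. wi n * (v \<bullet> (g n - mu))\<^sup>2) + 2 * c * X + c\<^sup>2"
        using mi0 by (simp add: sum.distrib X' sum_distrib_left mi_def)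
      finally show ?thesis .
    qed
    also have "\<dots> \<le> (op_norm Sig + dS) * (norm v)\<^sup>2 + 2 * (norm v * R) * (norm v * dmu) + (norm v * R)\<^sup>2"
    proof -
      have t1: "(\<Sum>n\<in>Iin. wi n * (v \<bullet> (g n - mu))\<^sup>2) \<le> (op_norm Sig + dS) * (norm v)\<^sup>2"
      proof -
        have "0 \<le> v \<bullet> ((Sig + dS *\<^sub>R mat 1 - (\<Sum>n\<in>Iin. wi n *\<^sub>R outer (g n - mu) (g n - mu))) *v v)"
          using lw by (simp add: loewner_le_def psd_def)
        hence "v \<bullet> ((\<Sum>n\<in>Iin. wi n *\<^sub>R outer (g n - mu) (g n - mu)) *v v) \<le> v \<bullet> (Sig *v v) + dS * (v \<bullet> v)"
          by (simp add: matrix_vector_mult_diff_rdistrib matrix_vector_mult_add_rdistrib scale_mulv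
              inner_diff_right inner_add_right)
        moreover have "v \<bullet> (Sig *v v) \<le> op_norm Sig * (norm v)\<^sup>2" by (rule quad_le_opnorm)
        ultimately show ?thesis
          by (simp add: quad_sum power2_norm_eq_inner algebra_simps)
      qed
      have cR: "\<bar>c\<bar> \<le> norm v * R"
      proof -
        have "\<bar>c\<bar> \<le> norm v * norm (mu - mh)" unfolding c_def by (rule Cauchy_Schwarz_ineq2)
        also have "\<dots> \<le> norm v * R" using R by (intro mult_left_mono) (auto simp: norm_minus_commute)
        finally show ?thesis .
      qed
      have Xd: "\<bar>X\<bar> \<le> norm v * dmu"
      proof -
        have "\<bar>X\<bar> \<le> norm v * norm (\<Sum>n\<in>Iin. wi n *\<^sub>R (g n - mu))" unfolding X_def by (rule Cauchy_Schwarz_ineq2)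
        also have "\<dots> \<le> norm v * dmu" using dmb by (intro mult_left_mono) auto
        finally show ?thesis .
      qed
      have t2: "2 * c * X \<le> 2 * (norm v * R) * (norm v * dmu)"
      proof -
        have "c * X \<le> \<bar>c\<bar> * \<bar>X\<bar>" by (simp add: abs_mult[symmetric])
        also have "\<dots> \<le> (norm v * R) * (norm v * dmu)" using cR Xd by (intro mult_mono) auto
        finally show ?thesis by simp
      qed
      have t3: "c\<^sup>2 \<le> (norm v * R)\<^sup>2" using cR by (metis abs_le_square_iff abs_of_nonneg abs_ge_zero order_trans)
      show ?thesis using t1 t2 t3 by linarith
    qed
    also have "\<dots> \<le> L * (norm v)\<^sup>2"
    proof -
      have "0 \<le> (norm v * dmu)\<^sup>2" by simp
      thus ?thesis by (simp add: L_def power2_eq_square algebra_simps)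
    qed
    finally show ?thesis .
  qed
  have "F ws \<le> L" unfolding F_def
    using r0 by (intro cSup_least) (auto simp: PP_def intro!: trace_le quadL)
  moreover have "Inf (F ` W) \<le> F ws"
    using wsW Fge by (intro cInf_lower) (auto intro!: bdd_belowI2[where m=0])
  ultimately show ?thesis unfolding OPTeq L_def by linarith
qed


theorem mainTheorem14:
  fixes eps zeta :: real and N L k T :: nat
    and Theta B0 :: "(real^'p) set" and c0 :: "real^'p" and r0 :: real
    and g :: "nat \<Rightarrow> real^'p \<Rightarrow> nat \<Rightarrow> real^'p"
    and mu_g :: "nat \<Rightarrow> real^'p \<Rightarrow> real^'p"
    and Sigma_g :: "nat \<Rightarrow> real^'p \<Rightarrow> real^'p^'p"
    and d_mu d_Sigma :: "nat \<Rightarrow> real \<Rightarrow> real"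
    and theta :: "real^'p" and w :: "nat \<Rightarrow> real" and mu_hat :: "real^'p"
    and C_stop R d_T :: "nat \<Rightarrow> real"
  assumes eps: "0 \<le> eps" "eps < 1/3" and zeta: "0 < zeta" "zeta < 1"
    and N: "1 \<le> N"
    and B0: "B0 = ball c0 r0" "B0 \<subseteq> Theta"
    and theta: "theta \<in> B0" and k: "k \<in> {1..L}"
    and Sigma_psd: "\<forall>\<theta>'\<in>B0. psd (Sigma_g k \<theta>')"
    and Sigma_bdd: "bdd_above ((\<lambda>\<theta>'. op_norm (Sigma_g k \<theta>')) ` B0)"
    and stable: "inlier_stable N eps (g k theta) (mu_g k theta) (Sigma_g k theta)
                   (d_mu k zeta) (d_Sigma k zeta)"
    and w: "w \<in> capped_simplex {1..N} eps"
  shows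
   "(gamma N (g k theta) w mu_hat \<le> C_stop k \<longrightarrow>
       norm ((\<Sum>n\<in>{1..N}. w n *\<^sub>R g k theta n) - mu_g k theta)
         \<le> d_mu k zeta + sqrt (eps / (1 - 2 * eps)) * sqrt (C_stop k))
    \<and>
    ((gamma N (g k theta) w mu_hat \<le> OPT N eps (g k theta) mu_hat + d_T k
      \<and> norm (mu_hat - mu_g k theta) \<le> R k
      \<and> 0 < T
      \<and> d_T k \<le> 4 * Max {(norm (g k theta i - g k theta j))\<^sup>2 | i j. i \<in> {1..N} \<and> j \<in> {1..N}}
                   * (sqrt (ln (real CARD('p)) / real T) + sqrt (ln (1 / (1 - eps)) / real T)))
     \<longrightarrow>
       norm ((\<Sum>n\<in>{1..N}. w n *\<^sub>R g k theta n) - mu_g k theta)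
         \<le> d_mu k zeta + sqrt (eps / (1 - 2 * eps))
             * sqrt ((SUP \<theta>'\<in>B0. op_norm (Sigma_g k \<theta>')) + d_Sigma k zeta
                     + (d_mu k zeta + R k)\<^sup>2 + d_T k))"
  proof -
  let ?G = "g k theta"
  have p1: "gamma N ?G w mu_hat \<le> C_stop k \<longrightarrow>
       norm ((\<Sum>n\<in>{1..N}. w n *\<^sub>R g k theta n) - mu_g k theta)
         \<le> d_mu k zeta + sqrt (eps / (1 - 2 * eps)) * sqrt (C_stop k)"
    using core[OF eps N stable w] by blast
  have p2: "norm ((\<Sum>n\<in>{1..N}. w n *\<^sub>R g k theta n) - mu_g k theta)
         \<le> d_mu k zeta + sqrt (eps / (1 - 2 * eps))
             * sqrt ((SUP \<theta>'\<in>B0. op_norm (Sigma_g k \<theta>')) + d_Sigma k zeta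
                     + (d_mu k zeta + R k)\<^sup>2 + d_T k)"
    if h1: "gamma N ?G w mu_hat \<le> OPT N eps ?G mu_hat + d_T k"
      and h2: "norm (mu_hat - mu_g k theta) \<le> R k"
  proof -
    have "OPT N eps ?G mu_hat \<le> op_norm (Sigma_g k theta) + d_Sigma k zeta + (d_mu k zeta + R k)\<^sup>2"
      by (rule opt_bound[OF eps N stable h2])
    moreover have "op_norm (Sigma_g k theta) \<le> (SUP \<theta>'\<in>B0. op_norm (Sigma_g k \<theta>'))"
      by (rule cSUP_upper[OF theta Sigma_bdd])
    ultimately have "gamma N ?G w mu_hat \<le> (SUP \<theta>'\<in>B0. op_norm (Sigma_g k \<theta>')) + d_Sigma k zeta
                     + (d_mu k zeta + R k)\<^sup>2 + d_T k"
      using h1 by linarith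
    thus ?thesis by (rule core[OF eps N stable w])
  qed
  show ?thesis using p1 p2 by blast
qed

end
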